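(* Let $\tilde f$ be analytic on $[-1,1]$ and $F=[f_{k,\ell}]$ the coefficient matrix of $\tilde f(t)\Theta(t-s)$. Then there exist $K>0$ and $\rho>1$ such that $|f_{k,\ell}|\le K\rho^{-|k-\ell|}$ for all $k,\ell\ge0$. Consequently, if $\tilde g$ is also analytic on $[-1,1]$ and $G$ is the coefficient matrix of $\tilde g(t)\Theta(t-s)$, then for all $k,\ell\ge0$ the series $\sum_{j\ge0}f_{k,j}g_{j,\ell}$ converges absolutely, so the product $FG$ is well defined.
   Context: Let $\{p_k\}_{k\ge0}$ be the orthonormal Legendre polynomials on $[-1,1]$: $p_k$ has exact degree $k$, positive leading coefficient, and $\int_{-1}^1 p_k(t)p_\ell(t)\,dt=\delta_{k\ell}$. Let $\Theta$ be the Heaviside function, $\Theta(x)=0$ for $x<0$ and $\Theta(x)=1$ for $x\ge0$. The coefficient matrix of a bounded function $h$ on $[-1,1]^2$ is the infinite matrix $H=[h_{k,\ell}]_{k,\ell\ge0}$ with $h_{k,\ell}=\int_{-1}^1\int_{-1}^1 h(\tau,\rho)p_k(\tau)p_\ell(\rho)\,d\rho\,d\tau$. *)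

theory Defs
  imports "HOL-Analysis.Analysis"
begin

definition legendreP :: "nat \<Rightarrow> real \<Rightarrow> real" where
  "legendreP n x = (\<Sum>i\<le>n. real (n choose i) * real ((n + i) choose i) * ((x - 1) / 2) ^ i)"

text \<open>Orthonormal Legendre polynomials on [-1,1]: p_k = sqrt((2k+1)/2) P_k
  (exact degree k, positive leading coefficient, orthonormal w.r.t. dt on [-1,1]).\<close>
definition legendre_on :: "nat \<Rightarrow> real \<Rightarrow> real" where
  "legendre_on k t = sqrt ((2 * real k + 1) / 2) * legendreP k t"

definition heaviside :: "real \<Rightarrow> real" where
  "heaviside x = (if x \<ge> 0 then 1 else 0)"

definition coeff_matrix :: "(real \<Rightarrow> real \<Rightarrow> real) \<Rightarrow> nat \<Rightarrow> nat \<Rightarrow> real" where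
  "coeff_matrix h k l =
     integral {-1..1} (\<lambda>\<tau>. integral {-1..1} (\<lambda>\<rho>. h \<tau> \<rho> * legendre_on k \<tau> * legendre_on l \<rho>))"

definition real_analytic_on_interval :: "(real \<Rightarrow> real) \<Rightarrow> bool" where
  "real_analytic_on_interval f \<longleftrightarrow>
     (\<forall>x\<in>{-1..1}. \<exists>r>0. \<exists>a::nat \<Rightarrow> real.
        \<forall>y. \<bar>y - x\<bar> < r \<longrightarrow> (\<lambda>n. a n * (y - x) ^ n) sums f y)"

end

theory Submission
  imports Defs "HOL-Computational_Algebra.Polynomial" "HOL-Complex_Analysis.Complex_Analysis"
begin

lemma pderiv_sum: "pderiv (sum f A) = sum (\<lambda>i. pderiv (f i)) A"
  by (induct A rule: infinite_finite_induct) (auto simp: pderiv_add)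

definition pint :: "real poly \<Rightarrow> real poly" where
  "pint p = (\<Sum>i\<le>degree p. monom (coeff p i / real (Suc i)) (Suc i))"

lemma pderiv_pint [simp]: "pderiv (pint p) = p"
proof -
  have "pderiv (pint p) = (\<Sum>i\<le>degree p. monom (coeff p i) i)"
    unfolding pint_def pderiv_sum by (intro sum.cong) (auto simp: pderiv_monom)
  also have "\<dots> = p" by (rule poly_as_sum_of_monoms)
  finally show ?thesis .
qed

lemma degree_pint: "degree (pint p) \<le> Suc (degree p)"
  unfolding pint_def by (intro degree_sum_le) (auto intro: order_trans[OF degree_monom_le])

lemma has_integral_poly:
  fixes A p :: "real poly"
  assumes "pderiv A = p" "a \<le> b"
  shows "(poly p has_integral (poly A b - poly A a)) {a..b}"
proof -
  have "\<And>x. (poly A has_vector_derivative poly p x) (at x within {a..b})"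
    using poly_DERIV[of A] assms(1) 
    by (metis has_field_derivative_at_within has_real_derivative_iff_has_vector_derivative)
  then show ?thesis using fundamental_theorem_of_calculus[OF assms(2)] by blast
qed

lemma integrable_poly [simp]: "poly (p::real poly) integrable_on {a..b}"
  by (intro integrable_continuous_real continuous_on_poly continuous_on_id)

definition Ip :: "real poly \<Rightarrow> real" where
  "Ip p = integral {-1..1} (poly p)"

lemma Ip_has_integral: "(poly p has_integral Ip p) {-1..1}"
  unfolding Ip_def by (rule integrable_integral) simp

lemma Ip_deriv: "Ip (pderiv A) = poly A 1 - poly A (-1)"
  unfolding Ip_def using has_integral_poly[of A "pderiv A" "-1" 1] by (simp add: integral_unique)

lemma Ip_add: "Ip (p + q) = Ip p + Ip q"
proof -
  have "poly (p + q) = (\<lambda>x. poly p x + poly q x)" by auto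
  then show ?thesis unfolding Ip_def by (simp add: integral_add)
qed

lemma Ip_smult: "Ip (smult c p) = c * Ip p"
proof -
  have "poly (smult c p) = (\<lambda>x. c * poly p x)" by auto
  then show ?thesis unfolding Ip_def by simp
qed

lemma Ip_0 [simp]: "Ip 0 = 0"
proof -
  have "poly 0 = (\<lambda>x. 0::real)" by auto
  then show ?thesis unfolding Ip_def by simp
qed

lemma Ip_diff: "Ip (p - q) = Ip p - Ip q"
proof -
  have "poly (p - q) = (\<lambda>x. poly p x - poly q x)" by auto
  then show ?thesis unfolding Ip_def by (simp add: integral_diff)
qed

lemma Ip_parts: "Ip (pderiv A * B) = poly A 1 * poly B 1 - poly A (-1) * poly B (-1) - Ip (A * pderiv B)"
proof -
  have "Ip (pderiv (A * B)) = poly A 1 * poly B 1 - poly A (-1) * poly B (-1)"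
    by (simp add: Ip_deriv)
  moreover have "pderiv (A * B) = A * pderiv B + pderiv A * B"
    by (simp add: pderiv_mult algebra_simps)
  ultimately show ?thesis by (simp add: Ip_add)
qed

lemma funpow_pderiv_0 [simp]: "(pderiv ^^ n) 0 = 0"
  by (induct n) auto

lemma funpow_pderiv_vanish: "degree (p::real poly) < n \<Longrightarrow> (pderiv ^^ n) p = 0"
proof (induct n arbitrary: p)
  case 0 then show ?case by simp
next
  case (Suc n)
  show ?case
  proof (cases "degree p = 0")
    case True
    then have "pderiv p = 0" by (simp add: pderiv_eq_0_iff)
    then show ?thesis by (simp only: funpow_Suc_right o_apply) simp
  next
    case False
    then have "degree (pderiv p) < n" using Suc.prems by (simp add: degree_pderiv)
    then show ?thesis using Suc.hyps by (simp only: funpow_Suc_right o_apply)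
  qed
qed

lemma degree_funpow_pderiv: "degree ((pderiv ^^ n) (p::real poly)) \<le> degree p - n"
proof (induct n)
  case (Suc n)
  then show ?case by (simp add: degree_pderiv)
qed simp

lemma funpow_pderiv_sum: "(pderiv ^^ n) (sum f A) = sum (\<lambda>i. (pderiv ^^ n) (f i)) A"
  by (induct n) (auto simp: pderiv_sum)

lemma funpow_pderiv_smult: "(pderiv ^^ n) (smult c p) = smult c ((pderiv ^^ n) p)"
  by (induct n) (auto simp: pderiv_smult)

lemma Ip_parts_iter:
  assumes van: "\<And>m. m < n \<Longrightarrow> poly ((pderiv ^^ m) R) 1 = 0 \<and> poly ((pderiv ^^ m) R) (-1) = 0"
  shows "i \<le> n \<Longrightarrow> Ip (q * (pderiv ^^ n) R) = (-1)^i * Ip ((pderiv ^^ i) q * (pderiv ^^ (n - i)) R)"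
proof (induct i)
  case 0 then show ?case by simp
next
  case (Suc i)
  define A where "A = (pderiv ^^ (n - Suc i)) R"
  define B where "B = (pderiv ^^ i) q"
  have nn: "n - i = Suc (n - Suc i)" using Suc.prems by simp
  have eq: "(pderiv ^^ (n - i)) R = pderiv A" unfolding A_def nn by simp
  have "poly A 1 = 0" "poly A (-1) = 0" using van[of "n - Suc i"] Suc.prems unfolding A_def by auto
  then have "Ip (B * pderiv A) = - Ip (pderiv B * A)"
    using Ip_parts[of A B] by (simp add: mult.commute)
  then show ?case using Suc by (simp add: eq B_def A_def)
qed



definition Rn :: "nat \<Rightarrow> real poly" where "Rn n = [:-1,0,1:]^n"
definition LP :: "nat \<Rightarrow> real poly" where
  "LP n = smult (1/(2^n * fact n)) ((pderiv^^n) (Rn n))"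

lemma dvd_pderiv_pow:
  fixes A :: "real poly"
  assumes "[:-a,1:]^(Suc k) dvd A" shows "[:-a,1:]^k dvd pderiv A"
proof -
  obtain h where h: "A = [:-a,1:]^(Suc k) * h" using assms by (auto elim: dvdE)
  have "pderiv A = [:-a,1:]^k * ([:-a,1:] * pderiv h + smult (of_nat (Suc k)) h)"
    unfolding h pderiv_mult pderiv_power_Suc by (simp add: pderiv_pCons algebra_simps)
  then show ?thesis by simp
qed

lemma dvd_funpow_pderiv:
  fixes A :: "real poly"
  assumes "[:-a,1:]^n dvd A" shows "m \<le> n \<Longrightarrow> [:-a,1:]^(n-m) dvd (pderiv^^m) A"
proof (induct m)
  case 0 then show ?case using assms by simp
next
  case (Suc m)
  then have "[:-a,1:]^(Suc (n - Suc m)) dvd (pderiv^^m) A"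
    by (metis Suc_diff_Suc Suc_le_lessD less_imp_le_nat)
  then show ?case by (simp add: dvd_pderiv_pow)
qed

lemma Rn_factor: "Rn n = [:-1,1:]^n * [:1,1:]^n"
proof -
  have "[:-1,0,1:] = [:-1,1:] * [:1,1::real:]" by simp
  then have "Rn n = ([:-1,1:] * [:1,1::real:])^n" by (simp only: Rn_def)
  then show ?thesis by (simp only: power_mult_distrib)
qed

lemma Rn_vanish:
  assumes "m < n"
  shows "poly ((pderiv ^^ m) (Rn n)) 1 = 0 \<and> poly ((pderiv ^^ m) (Rn n)) (-1) = 0"
proof -
  have d1: "[:-1,1:]^n dvd Rn n" unfolding Rn_factor by simp
  have d2: "[:-(-1),1:]^n dvd Rn n" unfolding Rn_factor by simp
  have e1: "[:-1,1:]^(n-m) dvd (pderiv ^^ m) (Rn n)" using dvd_funpow_pderiv[OF d1] assms by simp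
  have e2: "[:-(-1),1:]^(n-m) dvd (pderiv ^^ m) (Rn n)" using dvd_funpow_pderiv[OF d2] assms by simp
  have "[:-1,1:] dvd (pderiv ^^ m) (Rn n)"
    using e1 assms by (meson dvd_power dvd_trans zero_less_diff)
  moreover have "[:-(-1),1:] dvd (pderiv ^^ m) (Rn n)"
    using e2 assms by (meson dvd_power dvd_trans zero_less_diff)
  ultimately show ?thesis by (simp only: poly_eq_0_iff_dvd)
qed

lemma funpow_pderiv_lin:
  "(pderiv^^j) ([:-1,1:]^m :: real poly) =
     (if j \<le> m then smult (fact m / fact (m-j)) ([:-1,1:]^(m-j)) else 0)"
proof (induct j)
  case 0 then show ?case by simp
next
  case (Suc j)
  show ?case
  proof (cases "Suc j \<le> m")
    case True
    then have mj: "m - j = Suc (m - Suc j)" by simp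
    have "(pderiv^^Suc j) ([:-1,1:]^m :: real poly) =
           smult (fact m / fact (m-j)) (pderiv ([:-1,1:]^(Suc (m - Suc j))))"
      using Suc True by (simp add: pderiv_smult mj)
    also have "\<dots> = smult (fact m / fact (m-j) * of_nat (m - j)) ([:-1,1:]^(m - Suc j))"
      unfolding pderiv_power_Suc by (simp add: pderiv_pCons mj)
    also have "fact m / fact (m-j) * of_nat (m - j) = (fact m / fact (m - Suc j) :: real)"
      by (simp add: mj)
    finally show ?thesis using True by simp
  next
    case False
    show ?thesis
    proof (cases "j = m")
      case True
      then show ?thesis using Suc by (simp add: pderiv_smult)
    next
      case False
      then show ?thesis using Suc \<open>\<not> Suc j \<le> m\<close> by simp
    qed
  qed
qed

lemma const_poly_power: "[:c:]^n = [:c^n:]"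
  by (induct n) (auto simp: mult.commute)

lemma Rn_expand:
  "Rn n = (\<Sum>k\<le>n. smult (real (n choose k) * 2^(n-k)) ([:-1,1:]^(n+k)))"
proof -
  have "[:-1,0,1:] = [:-1,1:] * ([:-1,1:] + [:2::real:])" by simp
  then have "Rn n = [:-1,1:]^n * ([:-1,1:] + [:2:])^n"
    unfolding Rn_def by (simp only: power_mult_distrib)
  also have "\<dots> = [:-1,1:]^n * (\<Sum>k\<le>n. of_nat (n choose k) * [:-1,1:]^k * [:2:]^(n-k))"
    by (simp only: binomial_ring)
  also have "\<dots> = (\<Sum>k\<le>n. smult (real (n choose k) * 2^(n-k)) ([:-1,1:]^(n+k)))"
    unfolding sum_distrib_left
    by (intro sum.cong refl) (simp add: const_poly_power of_nat_poly power_add algebra_simps)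
  finally show ?thesis .
qed

lemma legendreP_poly: "legendreP n x = poly (LP n) x"
proof -
  have "(pderiv^^n) (Rn n) = (\<Sum>k\<le>n. smult (real (n choose k) * 2^(n-k) * (fact (n+k) / fact k)) ([:-1,1:]^k))"
    unfolding Rn_expand funpow_pderiv_sum funpow_pderiv_smult funpow_pderiv_lin
    by (intro sum.cong refl) auto
  then have "poly (LP n) x = (\<Sum>k\<le>n. (real (n choose k) * 2^(n-k) * (fact (n+k) / fact k)) * (x - 1)^k / (2^n * fact n))"
    unfolding LP_def by (simp add: poly_sum sum_divide_distrib)
  also have "\<dots> = legendreP n x"
    unfolding legendreP_def
  proof (intro sum.cong refl)
    fix k assume k: "k \<in> {..n}"
    have b: "real ((n + k) choose k) = fact (n+k) / (fact k * fact n)"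
      using binomial_fact[of k "n+k"] by simp
    have p: "(2::real)^n = 2^(n-k) * 2^k" using k by (simp add: power_add[symmetric])
    show "real (n choose k) * 2 ^ (n - k) * (fact (n + k) / fact k) * (x - 1) ^ k / (2 ^ n * fact n) =
         real (n choose k) * real ((n + k) choose k) * ((x - 1) / 2) ^ k"
      unfolding b p by (simp add: power_divide field_simps)
  qed
  finally show ?thesis by simp
qed

lemma degree_Rn: "degree (Rn n) \<le> 2 * n"
  unfolding Rn_def using degree_power_le[of "[:-1,0,1::real:]" n] by simp

lemma degree_LP: "degree (LP n) \<le> n"
  unfolding LP_def using degree_funpow_pderiv[of n "Rn n"] degree_Rn[of n]
  by (simp add: degree_smult_le) 

lemma LP_orth: "degree q < n \<Longrightarrow> Ip (q * LP n) = 0"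
proof -
  assume q: "degree q < n"
  have "Ip (q * (pderiv^^n) (Rn n)) = (-1)^n * Ip ((pderiv^^n) q * (pderiv^^(n-n)) (Rn n))"
    by (rule Ip_parts_iter) (use Rn_vanish in auto)
  also have "\<dots> = 0" using funpow_pderiv_vanish[OF q] by simp
  finally show ?thesis unfolding LP_def by (simp add: Ip_smult mult_smult_right)
qed



lemma Rn_neg: "Rn n = smult ((-1)^n) ([:1,0,-1:]^n)"
proof -
  have "[:-1,0,1:] = smult (-1) [:1,0,-1::real:]" by simp
  then show ?thesis unfolding Rn_def by (simp only: smult_power)
qed

lemma Ip_minus: "Ip (- p) = - Ip p"
proof -
  have "poly (- p) = (\<lambda>x. - poly p x)" by auto
  then show ?thesis unfolding Ip_def by (simp add: integral_neg)
qed

definition J :: "nat \<Rightarrow> real" where "J n = Ip ([:1,0,-1:]^n)"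

lemma W_mult: "p * [:1,0,-1::real:] = p - [:0,1:] * ([:0,1:] * p)"
  by (simp add: algebra_simps mult_pCons_right mult_pCons_left)

lemma J_rec: "J (Suc n) = J n - J (Suc n) / (2 * (real n + 1))"
proof -
  define W where "W = [:1,0,-1::real:]"
  define X where "X = [:0,1::real:]"
  have dW: "pderiv W = smult (-2) X" by (simp add: W_def X_def pderiv_pCons)
  have d: "pderiv (W^Suc n) = - smult (2 * (real n + 1)) (X * W^n)"
    unfolding pderiv_power_Suc dW by (simp add: algebra_simps)
  have XW: "X * W^n = smult (-1 / (2 * (real n + 1))) (pderiv (W^Suc n))"
    unfolding d by (simp add: field_simps)
  have W1: "poly W 1 = 0" "poly W (-1) = 0" by (simp_all add: W_def)
  have "Ip (X * (X * W^n)) = (-1 / (2 * (real n + 1))) * Ip (pderiv (W^Suc n) * X)"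
    unfolding XW by (simp add: Ip_smult Ip_minus mult.commute mult_smult_left)
  also have "Ip (pderiv (W^Suc n) * X) = - Ip (W^Suc n)"
    unfolding Ip_parts by (simp add: W1 X_def pderiv_pCons)
  finally have *: "Ip (X * (X * W^n)) = Ip (W^Suc n) / (2 * (real n + 1))" by simp
  have "W^Suc n = W^n - X * (X * W^n)"
    by (simp only: power_Suc2 W_def X_def W_mult)
  then have "Ip (W^Suc n) = Ip (W^n) - Ip (X * (X * W^n))" by (simp add: Ip_diff)
  then show ?thesis using * unfolding J_def W_def by simp
qed

lemma J0: "J 0 = 2"
proof -
  have "Ip 1 = Ip (pderiv [:0,1:])" by (simp add: pderiv_pCons one_pCons)
  also have "\<dots> = 2" by (simp add: Ip_deriv)
  finally show ?thesis by (simp add: J_def)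
qed

lemma fact_J: "fact (2*n) * J n = 2 / (2*n+1) * 4^n * (fact n)^2"
proof (induct n)
  case 0 then show ?case by (simp add: J0)
next
  case (Suc n)
  have r: "J (Suc n) = (2 * real n + 2) / (2 * real n + 3) * J n"
    using J_rec[of n] by (simp add: field_simps)
  have f: "fact (2 * Suc n) = (fact (2*n) :: real) * (2 * real n + 1) * (2 * real n + 2)"
    by (simp add: algebra_simps)
  have h1: "(fact (2*n) * J n) * (2 * real n + 1) = 2 * 4^n * (fact n)^2"
    unfolding Suc by simp
  have "fact (2 * Suc n) * J (Suc n) = ((fact (2*n) * J n) * (2 * real n + 1)) * ((2 * real n + 2) * (2 * real n + 2)) / (2 * real n + 3)"
    unfolding f r by (simp add: field_simps)
  also have "\<dots> = (2 * 4^n * (fact n)^2 * ((2 * real n + 2) * (2 * real n + 2))) / (2 * real n + 3)"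
    unfolding h1 by simp
  also have "\<dots> = (2 * (4 ^ Suc n * (fact (Suc n))^2)) / (2 * real n + 3)"
    by (simp add: algebra_simps power2_eq_square)
  also have "\<dots> = 2 / (2 * real (Suc n) + 1) * 4 ^ Suc n * (fact (Suc n))^2"
    by (simp add: add_ac)
  finally show ?case .
qed

lemma funpow_pderiv_Rn_top: "(pderiv^^(2*n)) (Rn n) = [:fact (2*n):]"
proof -
  have "(pderiv^^(2*n)) (Rn n) = (\<Sum>k\<le>n. (if k = n then [:fact (2*n):] else 0))"
    unfolding Rn_expand funpow_pderiv_sum funpow_pderiv_smult funpow_pderiv_lin
    by (intro sum.cong refl) (auto simp: mult_2)
  also have "\<dots> = [:fact (2*n):]" by simp
  finally show ?thesis .
qed

lemma LP_norm: "Ip (LP n * LP n) = 2 / (2 * real n + 1)"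
proof -
  define D where "D = (pderiv^^n) (Rn n)"
  have "Ip (D * D) = (-1)^n * Ip ((pderiv^^n) D * (pderiv^^(n-n)) (Rn n))"
    unfolding D_def by (rule Ip_parts_iter) (use Rn_vanish in auto)
  also have "(pderiv^^n) D = [:fact (2*n):]"
    unfolding D_def using funpow_pderiv_Rn_top[of n]
    by (simp add: mult_2 funpow_add)
  also have "Ip ([:fact (2*n):] * (pderiv^^(n-n)) (Rn n)) = fact (2*n) * ((-1)^n * J n)"
    by (simp add: Ip_smult Rn_neg J_def)
  finally have "Ip (D * D) = fact (2*n) * J n"
    by (simp add: power_mult_distrib[symmetric])
  then have "Ip (LP n * LP n) = (1/(2^n * fact n))^2 * (fact (2*n) * J n)"
    unfolding LP_def D_def[symmetric] by (simp add: Ip_smult power2_eq_square mult_smult_left mult_smult_right)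
  also have "\<dots> = ((2^n * fact n)^2 / (2^n * fact n)^2) * (2 / (2 * real n + 1))"
  proof -
    have "(2::real)^n * 2^n = 4^n" by (simp add: power_mult_distrib[symmetric])
    then have "((2::real)^n * fact n)^2 = 4^n * (fact n)^2" by (simp add: power2_eq_square algebra_simps)
    then show ?thesis unfolding fact_J by (simp add: power_divide)
  qed
  also have "\<dots> = 2 / (2 * real n + 1)" by simp
  finally show ?thesis .
qed



definition PL :: "nat \<Rightarrow> real poly" where
  "PL k = smult (sqrt ((2 * real k + 1) / 2)) (LP k)"

lemma legendre_on_poly: "legendre_on k x = poly (PL k) x"
  unfolding legendre_on_def PL_def by (simp add: legendreP_poly)

lemma PL_norm: "Ip (PL k * PL k) = 1"
proof -
  have "Ip (PL k * PL k) = (sqrt ((2 * real k + 1) / 2))^2 * Ip (LP k * LP k)"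
    unfolding PL_def by (simp add: Ip_smult mult_smult_left mult_smult_right power2_eq_square)
  also have "\<dots> = 1" unfolding LP_norm by simp
  finally show ?thesis .
qed

lemma PL_orth: "degree q < k \<Longrightarrow> Ip (q * PL k) = 0"
  unfolding PL_def by (simp add: Ip_smult mult_smult_right LP_orth)

lemma degree_PL: "degree (PL k) \<le> k"
  unfolding PL_def using degree_LP[of k] by simp

definition QL :: "nat \<Rightarrow> real poly" where
  "QL l = pint (PL l) - [:poly (pint (PL l)) (-1):]"

lemma pderiv_QL [simp]: "pderiv (QL l) = PL l"
  unfolding QL_def by (simp add: pderiv_diff pderiv_pCons)

lemma QL_m1: "poly (QL l) (-1) = 0"
  unfolding QL_def by simp

lemma QL_1: assumes "l \<ge> 1" shows "poly (QL l) 1 = 0"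
proof -
  have "poly (QL l) 1 = Ip (pderiv (QL l))" using Ip_deriv[of "QL l"] by (simp add: QL_m1)
  also have "\<dots> = Ip (1 * PL l)" by simp
  also have "\<dots> = 0" using assms by (intro PL_orth) simp
  finally show ?thesis .
qed

lemma degree_QL: "degree (QL l) \<le> l + 1"
proof -
  have "degree (QL l) \<le> max (degree (pint (PL l))) (degree [:poly (pint (PL l)) (-1):])"
    unfolding QL_def by (rule degree_diff_le_max)
  also have "\<dots> \<le> l + 1" using degree_pint[of "PL l"] degree_PL[of l] by simp
  finally show ?thesis .
qed

lemma QL_orth: assumes "degree g + 2 \<le> l" shows "Ip (g * QL l) = 0"
proof -
  define G where "G = pint g"
  have dG: "degree G < l" using degree_pint[of g] assms unfolding G_def by simp
  have "Ip (g * QL l) = Ip (pderiv G * QL l)" by (simp add: G_def)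
  also have "\<dots> = - Ip (G * PL l)"
    unfolding Ip_parts using QL_1[of l] assms by (simp add: QL_m1)
  also have "\<dots> = 0" using PL_orth[OF dG] by simp
  finally show ?thesis .
qed

lemma QL_has_integral: "-1 \<le> t \<Longrightarrow> (poly (PL l) has_integral poly (QL l) t) {-1..t}"
  using has_integral_poly[of "QL l" "PL l" "-1" t] by (simp add: QL_m1)

lemma cont_abs_poly: "continuous_on S (\<lambda>x. \<bar>poly (p::real poly) x\<bar>)"
  by (intro continuous_intros continuous_on_poly)

lemma Ip_const: "Ip [:c:] = 2 * c"
proof -
  have "Ip [:c:] = Ip (pderiv [:0,c:])" by (simp add: pderiv_pCons)
  then show ?thesis by (simp add: Ip_deriv)
qed

lemma int_abs_PL: "integral {-1..1} (\<lambda>x. \<bar>poly (PL k) x\<bar>) \<le> 3/2"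
proof -
  have "integral {-1..1} (\<lambda>x. \<bar>poly (PL k) x\<bar>) \<le> integral {-1..1} (poly ([:1/2:] + smult (1/2) (PL k * PL k)))"
  proof (rule integral_le)
    show "(\<lambda>x. \<bar>poly (PL k) x\<bar>) integrable_on {-1..1}"
      by (intro integrable_continuous_real cont_abs_poly)
    show "poly ([:1/2:] + smult (1/2) (PL k * PL k)) integrable_on {-1..1}"
      by simp
    fix x
    have "0 \<le> (\<bar>poly (PL k) x\<bar> - 1)^2" by simp
    then show "\<bar>poly (PL k) x\<bar> \<le> poly ([:1/2:] + smult (1/2) (PL k * PL k)) x"
      by (simp add: power2_eq_square algebra_simps abs_mult_self_eq)
  qed
  also have "\<dots> = 1 + Ip (PL k * PL k) / 2"
    unfolding Ip_def[symmetric] Ip_add Ip_smult Ip_const by simp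
  also have "\<dots> = 3/2" by (simp add: PL_norm)
  finally show ?thesis .
qed

lemma QL_bound: assumes "t \<in> {-1..1}" shows "\<bar>poly (QL l) t\<bar> \<le> 3/2"
proof -
  have "poly (QL l) t = integral {-1..t} (poly (PL l))"
    using QL_has_integral[of t l] assms by (simp add: integral_unique)
  then have "\<bar>poly (QL l) t\<bar> \<le> integral {-1..t} (\<lambda>x. \<bar>poly (PL l) x\<bar>)"
    using Henstock_Kurzweil_Integration.integral_norm_bound_integral[of "poly (PL l)" "{-1..t}" "\<lambda>x. \<bar>poly (PL l) x\<bar>"]
    by (simp add: integrable_continuous_real cont_abs_poly)
  also have "\<dots> \<le> integral {-1..1} (\<lambda>x. \<bar>poly (PL l) x\<bar>)"
    using assms by (intro integral_subset_le) (auto intro: integrable_continuous_real cont_abs_poly)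
  also have "\<dots> \<le> 3/2" by (rule int_abs_PL)
  finally show ?thesis .
qed

lemma coeff_matrix_eq:
  "coeff_matrix (\<lambda>t s. f t * heaviside (t - s)) k l =
     integral {-1..1} (\<lambda>t. f t * poly (PL k) t * poly (QL l) t)"
  unfolding coeff_matrix_def
proof (rule integral_cong)
  fix t :: real assume t: "t \<in> {-1..1}"
  have "(\<lambda>\<rho>. f t * heaviside (t - \<rho>) * legendre_on k t * legendre_on l \<rho>) =
        (\<lambda>\<rho>. (f t * poly (PL k) t) * (if \<rho> \<in> {..t} then poly (PL l) \<rho> else 0))"
    by (auto simp: heaviside_def legendre_on_poly)
  then have "integral {-1..1} (\<lambda>\<rho>. f t * heaviside (t - \<rho>) * legendre_on k t * legendre_on l \<rho>) =
        (f t * poly (PL k) t) * integral {-1..1} (\<lambda>\<rho>. if \<rho> \<in> {..t} then poly (PL l) \<rho> else 0)"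
    by simp
  also have "integral {-1..1} (\<lambda>\<rho>. if \<rho> \<in> {..t} then poly (PL l) \<rho> else 0) = integral {-1..t} (poly (PL l))"
  proof -
    have "{-1..1} \<inter> {..t} = {-1..t}" using t by auto
    then show ?thesis by (subst integral_restrict_Int) (use t in \<open>simp add: Int_commute min_def\<close>)
  qed
  also have "\<dots> = poly (QL l) t"
    using QL_has_integral[of t l] t by (simp add: integral_unique)
  finally show "integral {-1..1} (\<lambda>\<rho>. f t * heaviside (t - \<rho>) * legendre_on k t * legendre_on l \<rho>) =
       f t * poly (PL k) t * poly (QL l) t" by simp
qed



lemma orth_cases:
  assumes "degree q + l + 1 < k \<or> degree q + k + 2 \<le> l"
  shows "Ip (q * PL k * QL l) = 0"
  using assms
proof
  assume a: "degree q + l + 1 < k"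
  have "degree (q * QL l) < k"
    using degree_mult_le[of q "QL l"] degree_QL[of l] a by linarith
  then have "Ip ((q * QL l) * PL k) = 0" by (rule PL_orth)
  then show ?thesis by (simp add: ac_simps)
next
  assume a: "degree q + k + 2 \<le> l"
  have "degree (q * PL k) + 2 \<le> l"
    using degree_mult_le[of q "PL k"] degree_PL[of k] a by linarith
  then have "Ip ((q * PL k) * QL l) = 0" by (rule QL_orth)
  then show ?thesis by (simp add: ac_simps)
qed

lemma entry_bound:
  assumes cf: "continuous_on {-1..1} f"
    and approx: "\<And>x. x \<in> {-1..1} \<Longrightarrow> \<bar>f x - poly q x\<bar> \<le> E"
    and orth: "Ip (q * PL k * QL l) = 0"
  shows "\<bar>coeff_matrix (\<lambda>t s. f t * heaviside (t - s)) k l\<bar> \<le> 9/4 * E"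
proof -
  have E0: "0 \<le> E" using approx[of 0] by auto
  have i1: "(\<lambda>t. (f t - poly q t) * poly (PL k) t * poly (QL l) t) integrable_on {-1..1}"
    by (intro integrable_continuous_real continuous_intros continuous_on_poly cf)
  have i2: "poly (q * PL k * QL l) integrable_on {-1..1}" by simp
  have "coeff_matrix (\<lambda>t s. f t * heaviside (t - s)) k l =
        integral {-1..1} (\<lambda>t. (f t - poly q t) * poly (PL k) t * poly (QL l) t + poly (q * PL k * QL l) t)"
    unfolding coeff_matrix_eq by (intro integral_cong) (simp add: algebra_simps)
  also have "\<dots> = integral {-1..1} (\<lambda>t. (f t - poly q t) * poly (PL k) t * poly (QL l) t) + Ip (q * PL k * QL l)"
    unfolding Ip_def by (rule Henstock_Kurzweil_Integration.integral_add[OF i1 i2])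
  finally have eq: "coeff_matrix (\<lambda>t s. f t * heaviside (t - s)) k l =
      integral {-1..1} (\<lambda>t. (f t - poly q t) * poly (PL k) t * poly (QL l) t)"
    using orth by simp
  have "\<bar>integral {-1..1} (\<lambda>t. (f t - poly q t) * poly (PL k) t * poly (QL l) t)\<bar>
        \<le> integral {-1..1} (\<lambda>t. (E * (3/2)) * \<bar>poly (PL k) t\<bar>)"
  proof -
    have "norm (integral {-1..1} (\<lambda>t. (f t - poly q t) * poly (PL k) t * poly (QL l) t))
        \<le> integral {-1..1} (\<lambda>t. (E * (3/2)) * \<bar>poly (PL k) t\<bar>)"
    proof (rule Henstock_Kurzweil_Integration.integral_norm_bound_integral[OF i1])
      show "(\<lambda>t. (E * (3/2)) * \<bar>poly (PL k) t\<bar>) integrable_on {-1..1}"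
        by (intro integrable_continuous_real continuous_intros continuous_on_poly)
      fix t :: real assume t: "t \<in> {-1..1}"
      have "\<bar>f t - poly q t\<bar> * \<bar>poly (QL l) t\<bar> \<le> E * (3/2)"
        using approx[OF t] QL_bound[OF t, of l] E0 by (intro mult_mono) auto
      then have "\<bar>f t - poly q t\<bar> * \<bar>poly (QL l) t\<bar> * \<bar>poly (PL k) t\<bar> \<le> E * (3/2) * \<bar>poly (PL k) t\<bar>"
        by (intro mult_right_mono) auto
      then show "norm ((f t - poly q t) * poly (PL k) t * poly (QL l) t) \<le> (E * (3/2)) * \<bar>poly (PL k) t\<bar>"
        by (simp add: abs_mult ac_simps)
    qed
    then show ?thesis by simp
  qed
  also have "\<dots> = (E * (3/2)) * integral {-1..1} (\<lambda>t. \<bar>poly (PL k) t\<bar>)" by simp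
  also have "\<dots> \<le> (E * (3/2)) * (3/2)"
    using int_abs_PL[of k] E0 by (intro mult_left_mono) auto
  finally show ?thesis unfolding eq by simp
qed



definition Gs :: "(nat \<Rightarrow> real) \<Rightarrow> real \<Rightarrow> complex \<Rightarrow> complex" where
  "Gs a x z = (\<Sum>n. complex_of_real (a n) * (z - of_real x)^n)"

lemma Gs_summable:
  assumes sm: "\<forall>y. \<bar>y - x\<bar> < r \<longrightarrow> (\<lambda>n. a n * (y - x)^n) sums f y"
    and w: "norm w < r"
  shows "summable (\<lambda>n. complex_of_real (a n) * w^n)"
proof -
  define t where "t = (norm w + r) / 2"
  have t1: "norm w < t" unfolding t_def using w by simp
  have t2: "t < r" unfolding t_def using w by simp
  have "0 \<le> norm w" by simp
  then have "0 < norm w + r" using w by linarith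
  then have t3: "0 < t" unfolding t_def by simp
  note t = t1 t2 t3
  have "(\<lambda>n. a n * ((x + t) - x)^n) sums f (x + t)" using t by (intro sm[rule_format]) auto
  then have "summable (\<lambda>n. a n * t^n)" by (simp add: sums_summable)
  then have "summable (\<lambda>n. complex_of_real (a n * t^n))" by (simp only: summable_complex_of_real)
  then have "summable (\<lambda>n. complex_of_real (a n) * (complex_of_real t)^n)" by simp
  from powser_insidea[OF this, of w] t have "summable (\<lambda>n. norm (complex_of_real (a n) * w^n))"
    by simp
  then show ?thesis by (rule summable_norm_cancel)
qed

lemma Gs_deriv:
  assumes sm: "\<forall>y. \<bar>y - x\<bar> < r \<longrightarrow> (\<lambda>n. a n * (y - x)^n) sums f y"
    and z: "norm (z - of_real x) < r"
  shows "\<exists>D. (Gs a x has_field_derivative D) (at z)"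
proof -
  have "((\<lambda>w. \<Sum>n. complex_of_real (a n) * w^n) has_field_derivative
          (\<Sum>n. diffs (\<lambda>n. complex_of_real (a n)) n * (z - of_real x)^n)) (at (z - of_real x))"
    by (rule termdiffs_strong') (use Gs_summable[OF sm] z in auto)
  then have "((\<lambda>z. \<Sum>n. complex_of_real (a n) * (z - of_real x)^n) has_field_derivative
          (\<Sum>n. diffs (\<lambda>n. complex_of_real (a n)) n * (z - of_real x)^n) * 1) (at z)"
    by (rule DERIV_chain2) (auto intro!: derivative_eq_intros)
  then show ?thesis unfolding Gs_def by blast
qed

lemma Gs_holo:
  assumes sm: "\<forall>y. \<bar>y - x\<bar> < r \<longrightarrow> (\<lambda>n. a n * (y - x)^n) sums f y"
  shows "Gs a x holomorphic_on ball (of_real x) r"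
  unfolding holomorphic_on_open[OF open_ball]
  using Gs_deriv[OF sm] by (auto simp: dist_norm norm_minus_commute)

lemma Gs_real:
  assumes sm: "\<forall>y. \<bar>y - x\<bar> < r \<longrightarrow> (\<lambda>n. a n * (y - x)^n) sums f y"
    and y: "\<bar>y - x\<bar> < r"
  shows "Gs a x (of_real y) = of_real (f y)"
proof -
  have "(\<lambda>n. complex_of_real (a n * (y - x)^n)) sums complex_of_real (f y)"
    using sm y by (simp only: sums_of_real_iff)
  then have "(\<lambda>n. complex_of_real (a n) * (complex_of_real y - of_real x)^n) sums complex_of_real (f y)"
    by simp
  then show ?thesis unfolding Gs_def by (rule sums_unique[symmetric])
qed

lemma complex_ext:
  assumes "real_analytic_on_interval f"
  shows "\<exists>U F. open U \<and> F holomorphic_on U \<and>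
           (\<forall>x\<in>{-1..1}. complex_of_real x \<in> U \<and> F (of_real x) = of_real (f x))"
proof -
  have ex: "\<forall>x\<in>{-1..1}. \<exists>p. fst p > 0 \<and> (\<forall>y. \<bar>y - x\<bar> < fst p \<longrightarrow> (\<lambda>n. snd p n * (y - x)^n) sums f y)"
    using assms unfolding real_analytic_on_interval_def by fastforce
  obtain P where P: "\<forall>x\<in>{-1..1}. fst (P x) > 0 \<and> (\<forall>y. \<bar>y - x\<bar> < fst (P x) \<longrightarrow> (\<lambda>n. snd (P x) n * (y - x)^n) sums f y)"
    using bchoice[OF ex] by blast
  define r where "r x = fst (P x)" for x
  define a where "a x = snd (P x)" for x
  have r0: "x \<in> {-1..1} \<Longrightarrow> r x > 0" for x using P by (simp add: r_def)
  have sm: "x \<in> {-1..1} \<Longrightarrow> \<forall>y. \<bar>y - x\<bar> < r x \<longrightarrow> (\<lambda>n. a x n * (y - x)^n) sums f y" for x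
    using P by (simp add: r_def a_def)
  define B where "B x = ball (complex_of_real x) (r x)" for x
  have agree: "Gs (a x1) x1 z = Gs (a x2) x2 z"
    if x1: "x1 \<in> {-1..1}" and x2: "x2 \<in> {-1..1}" and z: "z \<in> B x1 \<inter> B x2" for x1 x2 z
  proof -
    define S where "S = B x1 \<inter> B x2"
    have oS: "open S" and cS: "connected S" unfolding S_def B_def
      by (auto intro!: convex_connected convex_Int)
    have hol: "(\<lambda>w. Gs (a x1) x1 w - Gs (a x2) x2 w) holomorphic_on S"
      unfolding S_def B_def
      by (intro holomorphic_on_diff holomorphic_on_subset[OF Gs_holo[OF sm[OF x1]]]
                holomorphic_on_subset[OF Gs_holo[OF sm[OF x2]]]) auto
    define \<xi> where "\<xi> = complex_of_real (Re z)"
    have xiS: "\<xi> \<in> S"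
    proof -
      have "dist (complex_of_real x) \<xi> \<le> dist (complex_of_real x) z" for x
      proof -
        have "\<bar>Re (complex_of_real x - z)\<bar> \<le> cmod (complex_of_real x - z)" by (rule abs_Re_le_cmod)
        then show ?thesis by (simp add: \<xi>_def dist_norm flip: of_real_diff)
      qed
      then show ?thesis using z unfolding S_def B_def
        by (meson IntD1 IntD2 IntI le_less_trans mem_ball)
    qed
    define U0 where "U0 = S \<inter> \<real>"
    have U0: "Gs (a x1) x1 w - Gs (a x2) x2 w = 0" if "w \<in> U0" for w
    proof -
      from that obtain y where y: "w = complex_of_real y" unfolding U0_def by (auto elim: Reals_cases)
      have "\<bar>y - x1\<bar> < r x1" "\<bar>y - x2\<bar> < r x2"
        using that unfolding U0_def S_def B_def y by (auto simp: dist_norm abs_minus_commute simp flip: of_real_diff)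
      then show ?thesis unfolding y using Gs_real[OF sm[OF x1]] Gs_real[OF sm[OF x2]] by simp
    qed
    have lim: "\<xi> islimpt U0"
    proof -
      obtain e0 where e0: "e0 > 0" "ball \<xi> e0 \<subseteq> S" using oS xiS openE by blast
      show ?thesis unfolding islimpt_approachable
      proof (intro allI impI)
        fix e :: real assume e: "e > 0"
        define x' where "x' = \<xi> + of_real (min e e0 / 2)"
        have d: "dist x' \<xi> = min e e0 / 2" using e e0 by (simp add: x'_def dist_norm)
        have "x' \<in> U0" unfolding U0_def using e0 d e
          by (auto simp: x'_def \<xi>_def dist_commute intro!: subsetD[OF e0(2)])
        moreover have "x' \<noteq> \<xi>" using d e e0 by auto
        moreover have "dist x' \<xi> < e" using d e e0 by linarith
        ultimately show "\<exists>x'\<in>U0. x' \<noteq> \<xi> \<and> dist x' \<xi> < e" by blast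
      qed
    qed
    have "Gs (a x1) x1 z - Gs (a x2) x2 z = 0"
      by (rule analytic_continuation[OF hol oS cS _ xiS lim]) (use U0 z in \<open>auto simp: U0_def S_def\<close>)
    then show ?thesis by simp
  qed
  define c where "c z = (SOME x. x \<in> {-1..1} \<and> z \<in> B x)" for z
  define F where "F z = Gs (a (c z)) (c z) z" for z
  define U where "U = (\<Union>x\<in>{-1..1}. B x)"
  have loc: "F z = Gs (a x0) x0 z" if "x0 \<in> {-1..1}" "z \<in> B x0" for x0 z
  proof -
    have "c z \<in> {-1..1} \<and> z \<in> B (c z)" unfolding c_def by (rule someI[of _ x0]) (use that in auto)
    then show ?thesis unfolding F_def using agree that by blast
  qed
  have oU: "open U" unfolding U_def B_def by auto
  have "F holomorphic_on U"
    unfolding holomorphic_on_open[OF oU]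
  proof
    fix z assume "z \<in> U"
    then obtain x0 where x0: "x0 \<in> {-1..1}" "z \<in> B x0" unfolding U_def by auto
    obtain D where D: "(Gs (a x0) x0 has_field_derivative D) (at z)"
      using Gs_deriv[OF sm[OF x0(1)]] x0(2) by (auto simp: B_def dist_norm norm_minus_commute)
    have "(F has_field_derivative D) (at z)"
      by (rule has_field_derivative_transform_within_open[OF D, of "B x0"])
         (use x0 loc in \<open>auto simp: B_def\<close>)
    then show "\<exists>f'. (F has_field_derivative f') (at z)" by blast
  qed
  moreover have "\<forall>x\<in>{-1..1}. complex_of_real x \<in> U \<and> F (of_real x) = of_real (f x)"
  proof
    fix x :: real assume x: "x \<in> {-1..1}"
    have xb: "complex_of_real x \<in> B x" using r0[OF x] by (simp add: B_def)
    have "F (of_real x) = Gs (a x) x (of_real x)" by (rule loc[OF x xb])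
    also have "\<dots> = of_real (f x)" using Gs_real[OF sm[OF x], of x] r0[OF x] by simp
    finally show "complex_of_real x \<in> U \<and> F (of_real x) = of_real (f x)"
      using xb x unfolding U_def by auto
  qed
  ultimately show ?thesis using oU by blast
qed

lemma box_in_open:
  assumes "open U" "\<forall>x\<in>{-1..1}. complex_of_real x \<in> U"
  shows "\<exists>\<delta>>0. \<delta> \<le> 1/2 \<and> cbox (Complex (-1-\<delta>) (-\<delta>)) (Complex (1+\<delta>) \<delta>) \<subseteq> U"
proof -
  have "compact (complex_of_real ` {-1..1})"
    by (intro compact_continuous_image continuous_intros) auto
  then obtain e where e: "e > 0" "(\<Union>x\<in>complex_of_real ` {-1..1}. ball x e) \<subseteq> U"
    using compact_subset_open_imp_ball_epsilon_subset[of _ U] assms by blast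
  define \<delta> where "\<delta> = min (1/2) (e/3)"
  have d: "\<delta> > 0" "\<delta> \<le> 1/2" "2 * \<delta> < e" using e by (auto simp: \<delta>_def)
  have "cbox (Complex (-1-\<delta>) (-\<delta>)) (Complex (1+\<delta>) \<delta>) \<subseteq> U"
  proof
    fix z assume z: "z \<in> cbox (Complex (-1-\<delta>) (-\<delta>)) (Complex (1+\<delta>) \<delta>)"
    then have zr: "-1-\<delta> \<le> Re z" "Re z \<le> 1+\<delta>" "-\<delta> \<le> Im z" "Im z \<le> \<delta>"
      by (auto simp: in_cbox_complex_iff)
    define x where "x = max (-1) (min 1 (Re z))"
    have x: "x \<in> {-1..1}" by (auto simp: x_def)
    have "\<bar>Re (z - of_real x)\<bar> \<le> \<delta>" "\<bar>Im (z - of_real x)\<bar> \<le> \<delta>" using zr by (auto simp: x_def)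
    then have "cmod (z - of_real x) \<le> 2 * \<delta>" using cmod_le[of "z - of_real x"] by linarith
    then have "z \<in> ball (complex_of_real x) e" using d by (simp add: dist_norm norm_minus_commute)
    then show "z \<in> U" using e(2) x by blast
  qed
  then show ?thesis using d by blast
qed



definition Tk :: "complex \<Rightarrow> complex poly" where
  "Tk z = [:complex_of_real (1 - (cmod z)^2/8), complex_of_real (2 * Re z / 8), complex_of_real (-1/8):]"

definition Kp :: "nat \<Rightarrow> complex \<Rightarrow> complex poly" where
  "Kp N z = smult (1/8) ([:cnj z, -1:] * (\<Sum>n\<le>N. Tk z ^ n))"

lemma poly_Tk: "poly (Tk z) (of_real x) = of_real (1 - (cmod (z - of_real x))^2/8)"
proof -
  have h1: "(cmod (z - of_real x))^2 = (Re z - x)^2 + (Im z)^2" by (simp add: cmod_power2)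
  have h2: "(cmod z)^2 = (Re z)^2 + (Im z)^2" by (simp add: cmod_power2)
  have h: "(cmod (z - of_real x))^2 = (cmod z)^2 - 2 * x * Re z + x^2"
    unfolding h1 h2 by (simp add: power2_eq_square algebra_simps)
  show ?thesis unfolding Tk_def h
    by (simp add: complex_eq_iff field_simps power2_eq_square)
qed

lemma poly_Kp: "poly (Kp N z) (of_real x) =
   cnj (z - of_real x) * of_real ((\<Sum>n\<le>N. (1 - (cmod (z - of_real x))^2/8)^n) / 8)"
  unfolding Kp_def by (simp add: poly_sum poly_power poly_Tk algebra_simps)

lemma degree_Kp: "degree (Kp N z) \<le> 2 * N + 1"
proof -
  have "degree (\<Sum>n\<le>N. Tk z ^ n) \<le> 2 * N"
  proof (rule degree_sum_le)
    fix n assume "n \<in> {..N}"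
    then have "n * 2 \<le> 2 * N" by simp
    moreover have "degree (Tk z ^ n) \<le> n * degree (Tk z)" by (metis degree_power_le mult.commute)
    moreover have "degree (Tk z) \<le> 2" unfolding Tk_def by simp
    ultimately show "degree (Tk z ^ n) \<le> 2 * N"
      by (meson le_trans mult_le_mono2)
  qed simp
  moreover have "degree ([:cnj z, -1:] :: complex poly) \<le> 1" by simp
  ultimately have "degree ([:cnj z, -1:] * (\<Sum>n\<le>N. Tk z ^ n)) \<le> 1 + 2 * N"
    using degree_mult_le[of "[:cnj z, -1:]" "\<Sum>n\<le>N. Tk z ^ n"] by linarith
  then show ?thesis unfolding Kp_def by simp
qed

lemma kernel_err:
  fixes w :: complex
  assumes d: "\<delta> \<le> cmod w" "(cmod w)^2 \<le> 8" "0 < \<delta>"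
  shows "cmod (1/w - cnj w * of_real ((\<Sum>n\<le>N. (1 - (cmod w)^2/8)^n) / 8)) \<le> (1 - \<delta>^2/8)^(Suc N) / \<delta>"
proof -
  define d where "d = cmod w"
  define t where "t = 1 - d^2/8"
  have dpos: "0 < d" using d unfolding d_def by linarith
  have t1: "t \<noteq> 1" "1 - t = d^2/8" using dpos by (auto simp: t_def)
  have t0: "0 \<le> t" using d by (simp add: t_def d_def)
  have tle: "t \<le> 1 - \<delta>^2/8"
  proof -
    have "\<delta>^2 \<le> d^2" using d by (intro power_mono) (auto simp: d_def)
    then show ?thesis by (simp add: t_def)
  qed
  have S: "(\<Sum>n\<le>N. t^n) = (1 - t^Suc N) / (d^2/8)"
    using sum_gp_strict[of t "Suc N"] t1 by (simp add: lessThan_Suc_atMost)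
  have "cmod w > 0" using d by linarith
  then have w0: "w \<noteq> 0" by auto
  have inv: "1/w = cnj w * of_real (1/d^2)"
    using complex_div_cnj[of 1 w] w0 by (simp add: d_def)
  have r: "1/d^2 - ((1 - t^Suc N) / (d^2/8)) / 8 = t^Suc N / d^2"
    using dpos by (simp add: field_simps)
  have "1/w - cnj w * of_real ((\<Sum>n\<le>N. t^n) / 8) = cnj w * of_real (1/d^2 - ((\<Sum>n\<le>N. t^n) / 8))"
    unfolding inv by (simp only: of_real_diff right_diff_distrib)
  also have "\<dots> = cnj w * of_real (t^Suc N / d^2)" unfolding S r ..
  finally have "1/w - cnj w * of_real ((\<Sum>n\<le>N. t^n) / 8) = cnj w * of_real (t^Suc N / d^2)" .
  then have "cmod (1/w - cnj w * of_real ((\<Sum>n\<le>N. t^n) / 8)) = cmod (cnj w) * \<bar>t^Suc N / d^2\<bar>"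
    by (simp only: norm_mult norm_of_real)
  also have "\<dots> = d * (t^Suc N / d^2)" using t0 by (simp add: d_def)
  also have "\<dots> = t^Suc N / d" using dpos by (simp add: power2_eq_square)
  also have "\<dots> \<le> (1 - \<delta>^2/8)^(Suc N) / d"
    using t0 tle dpos by (intro divide_right_mono power_mono) auto
  also have "\<dots> \<le> (1 - \<delta>^2/8)^(Suc N) / \<delta>"
    using d dpos t0 tle by (intro divide_left_mono) (auto simp: d_def)
  finally show ?thesis by (simp add: t_def d_def)
qed

definition cc :: "complex set \<Rightarrow> (complex \<Rightarrow> complex poly) \<Rightarrow> bool" where
  "cc S P \<longleftrightarrow> (\<forall>j. continuous_on S (\<lambda>z. coeff (P z) j))"

lemma cc_const: "cc S (\<lambda>z. p)" unfolding cc_def by simp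

lemma cc_pCons: assumes "continuous_on S a" "cc S P" shows "cc S (\<lambda>z. pCons (a z) (P z))"
  unfolding cc_def
proof
  fix j show "continuous_on S (\<lambda>z. coeff (pCons (a z) (P z)) j)"
    using assms by (cases j) (auto simp: cc_def)
qed

lemma cc_add: "cc S P \<Longrightarrow> cc S Q \<Longrightarrow> cc S (\<lambda>z. P z + Q z)"
  unfolding cc_def by (auto intro!: continuous_intros)

lemma cc_mult: "cc S P \<Longrightarrow> cc S Q \<Longrightarrow> cc S (\<lambda>z. P z * Q z)"
  unfolding cc_def coeff_mult by (auto intro!: continuous_intros)

lemma cc_smult: "cc S P \<Longrightarrow> cc S (\<lambda>z. smult c (P z))"
  unfolding cc_def by (auto intro!: continuous_intros)

lemma cc_power: "cc S P \<Longrightarrow> cc S (\<lambda>z. P z ^ n)"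
  by (induct n) (auto intro: cc_mult cc_const)

lemma cc_sum: "(\<And>i. i \<in> A \<Longrightarrow> cc S (P i)) \<Longrightarrow> cc S (\<lambda>z. \<Sum>i\<in>A. P i z)"
proof (induct A rule: infinite_finite_induct)
  case (insert x F) then show ?case by (auto intro: cc_add)
qed (auto intro: cc_const)

lemma cc_Kp: "cc S (Kp N)"
proof -
  have "cc S Tk" unfolding Tk_def
    by (intro cc_pCons cc_const continuous_intros) auto
  then have "cc S (\<lambda>z. (\<Sum>n\<le>N. Tk z ^ n))" by (intro cc_sum cc_power)
  moreover have "cc S (\<lambda>z. [:cnj z, -1:])" by (intro cc_pCons cc_const continuous_intros)
  ultimately show ?thesis unfolding Kp_def[abs_def] by (intro cc_smult cc_mult)
qed

lemma poly_sum_bound: fixes p :: "complex poly" assumes "degree p \<le> D" shows "poly p y = (\<Sum>j\<le>D. coeff p j * y^j)"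
  unfolding poly_altdef
  by (rule sum.mono_neutral_left) (use assms in \<open>auto simp: coeff_eq_0\<close>)

lemma rect_bound:
  assumes c: "continuous_on (path_image (rectpath a b)) h"
    and B: "\<And>z. z \<in> path_image (rectpath a b) \<Longrightarrow> cmod (h z) \<le> B" and B0: "0 \<le> B"
  shows "cmod (contour_integral (rectpath a b) h) \<le> B * (4 * cmod (b - a))"
proof -
  define a2 where "a2 = Complex (Re b) (Im a)"
  define a4 where "a4 = Complex (Re a) (Im b)"
  have pe: "path_image (rectpath a b) = closed_segment a a2 \<union> closed_segment a2 b \<union> closed_segment b a4 \<union> closed_segment a4 a"
    by (simp add: rectpath_def Let_def path_image_join a2_def a4_def Un_assoc)
  have side: "\<And>u v. closed_segment u v \<subseteq> path_image (rectpath a b) \<Longrightarrow> cmod (v - u) \<le> cmod (b - a) \<Longrightarrow>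
       \<exists>i. (h has_contour_integral i) (linepath u v) \<and> cmod i \<le> B * cmod (b - a)"
  proof -
    fix u v assume s: "closed_segment u v \<subseteq> path_image (rectpath a b)" and l: "cmod (v - u) \<le> cmod (b - a)"
    have "h contour_integrable_on linepath u v"
      by (rule contour_integrable_continuous_linepath) (rule continuous_on_subset[OF c s])
    then have hi: "(h has_contour_integral contour_integral (linepath u v) h) (linepath u v)"
      by (rule has_contour_integral_integral)
    have "cmod (contour_integral (linepath u v) h) \<le> B * cmod (v - u)"
      by (rule has_contour_integral_bound_linepath[OF hi B0]) (use B s in auto)
    also have "\<dots> \<le> B * cmod (b - a)" using l B0 by (rule mult_left_mono)
    finally show "\<exists>i. (h has_contour_integral i) (linepath u v) \<and> cmod i \<le> B * cmod (b - a)"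
      using hi by blast
  qed
  have l1: "cmod (a2 - a) \<le> cmod (b - a)"
  proof -
    have "cmod (a2 - a) = \<bar>Re (b - a)\<bar>" by (simp add: a2_def cmod_def)
    then show ?thesis using abs_Re_le_cmod by metis
  qed
  have l2: "cmod (b - a2) \<le> cmod (b - a)"
  proof -
    have "cmod (b - a2) = \<bar>Im (b - a)\<bar>" by (simp add: a2_def cmod_def)
    then show ?thesis using abs_Im_le_cmod by metis
  qed
  have l3: "cmod (a4 - b) \<le> cmod (b - a)"
  proof -
    have "cmod (a4 - b) = \<bar>Re (b - a)\<bar>" by (simp add: a4_def cmod_def power2_commute)
    then show ?thesis using abs_Re_le_cmod by metis
  qed
  have l4: "cmod (a - a4) \<le> cmod (b - a)"
  proof -
    have "cmod (a - a4) = \<bar>Im (b - a)\<bar>" by (simp add: a4_def cmod_def power2_commute)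
    then show ?thesis using abs_Im_le_cmod by metis
  qed
  obtain i1 where i1: "(h has_contour_integral i1) (linepath a a2)" "cmod i1 \<le> B * cmod (b - a)"
    using side[OF _ l1] pe by auto
  obtain i2 where i2: "(h has_contour_integral i2) (linepath a2 b)" "cmod i2 \<le> B * cmod (b - a)"
    using side[OF _ l2] pe by auto
  obtain i3 where i3: "(h has_contour_integral i3) (linepath b a4)" "cmod i3 \<le> B * cmod (b - a)"
    using side[OF _ l3] pe by auto
  obtain i4 where i4: "(h has_contour_integral i4) (linepath a4 a)" "cmod i4 \<le> B * cmod (b - a)"
    using side[OF _ l4] pe by auto
  have "(h has_contour_integral (i1 + (i2 + (i3 + i4)))) (rectpath a b)"
    unfolding rectpath_def Let_def a2_def[symmetric] a4_def[symmetric]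
    by (intro has_contour_integral_join i1(1) i2(1) i3(1) i4(1) valid_path_join valid_path_linepath) auto
  then have "contour_integral (rectpath a b) h = i1 + (i2 + (i3 + i4))"
    by (rule contour_integral_unique)
  also have "cmod \<dots> \<le> cmod i1 + (cmod i2 + (cmod i3 + cmod i4))"
    by (meson add_mono norm_triangle_ineq order_trans order_refl)
  finally show ?thesis using i1(2) i2(2) i3(2) i4(2) by linarith
qed



lemma rect_integrable:
  assumes c: "continuous_on (path_image (rectpath a b)) h"
  shows "h contour_integrable_on (rectpath a b)"
proof -
  define a2 where "a2 = Complex (Re b) (Im a)"
  define a4 where "a4 = Complex (Re a) (Im b)"
  have pe: "path_image (rectpath a b) = closed_segment a a2 \<union> closed_segment a2 b \<union> closed_segment b a4 \<union> closed_segment a4 a"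
    by (simp add: rectpath_def Let_def path_image_join a2_def a4_def Un_assoc)
  have side: "\<And>u v. closed_segment u v \<subseteq> path_image (rectpath a b) \<Longrightarrow>
       (h has_contour_integral contour_integral (linepath u v) h) (linepath u v)"
    by (rule has_contour_integral_integral, rule contour_integrable_continuous_linepath,
        rule continuous_on_subset[OF c])
  have "(h has_contour_integral (contour_integral (linepath a a2) h + (contour_integral (linepath a2 b) h +
          (contour_integral (linepath b a4) h + contour_integral (linepath a4 a) h)))) (rectpath a b)"
    unfolding rectpath_def Let_def a2_def[symmetric] a4_def[symmetric]
    by (intro has_contour_integral_join side valid_path_join valid_path_linepath) (auto simp: pe)
  then show ?thesis by (rule has_contour_integral_integrable)
qed

lemma bernstein:
  assumes fa: "real_analytic_on_interval f"
  shows "continuous_on {-1..1} f \<and> (\<exists>C \<theta>. 0 < C \<and> 0 < \<theta> \<and> \<theta> < 1 \<and>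
     (\<forall>N. \<exists>q. degree q \<le> 2*N+1 \<and> (\<forall>x\<in>{-1..1}. \<bar>f x - poly q x\<bar> \<le> C * \<theta>^N)))"
proof -
  obtain U F where U: "open U" "F holomorphic_on U"
      "\<forall>x\<in>{-1..1}. complex_of_real x \<in> U \<and> F (of_real x) = of_real (f x)"
    using complex_ext[OF fa] by blast
  obtain \<delta> where \<delta>: "\<delta> > 0" "\<delta> \<le> 1/2" "cbox (Complex (-1-\<delta>) (-\<delta>)) (Complex (1+\<delta>) \<delta>) \<subseteq> U"
    using box_in_open[OF U(1)] U(3) by blast
  define a1 where "a1 = Complex (-1-\<delta>) (-\<delta>)"
  define a3 where "a3 = Complex (1+\<delta>) \<delta>"
  define \<gamma> where "\<gamma> = rectpath a1 a3"
  have ord: "Re a1 \<le> Re a3" "Im a1 \<le> Im a3" using \<delta> by (auto simp: a1_def a3_def)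
  have PI: "path_image \<gamma> = cbox a1 a3 - box a1 a3"
    unfolding \<gamma>_def by (rule path_image_rectpath_cbox_minus_box[OF ord])
  have holc: "F holomorphic_on cbox a1 a3"
    using U(2) \<delta>(3) unfolding a1_def a3_def by (rule holomorphic_on_subset)
  have contc: "continuous_on (cbox a1 a3) F" using holc by (rule holomorphic_on_imp_continuous_on)
  have vg: "valid_path \<gamma>" unfolding \<gamma>_def by simp
  have inbox: "complex_of_real x \<in> box a1 a3" if "x \<in> {-1..1}" for x
    using that \<delta> by (auto simp: a1_def a3_def in_box_complex_iff)
  have cf: "continuous_on {-1..1} f"
  proof -
    have "continuous_on {-1..1} (\<lambda>x. F (complex_of_real x))"
    proof (rule continuous_on_compose2[OF contc])
      show "continuous_on {-1..1} complex_of_real" by (intro continuous_intros)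
      show "complex_of_real ` {-1..1} \<subseteq> cbox a1 a3" using inbox box_subset_cbox by blast
    qed
    then have "continuous_on {-1..1} (\<lambda>x. Re (F (complex_of_real x)))"
      by (intro continuous_intros)
    then show ?thesis by (rule continuous_on_eq) (use U(3) in auto)
  qed
  have contPI: "continuous_on (path_image \<gamma>) F" using PI by (intro continuous_on_subset[OF contc]) auto
  have "compact (F ` path_image \<gamma>)"
    using contPI vg by (intro compact_continuous_image compact_path_image valid_path_imp_path)
  then obtain B where B: "B > 0" "\<And>z. z \<in> path_image \<gamma> \<Longrightarrow> cmod (F z) \<le> B"
    using compact_imp_bounded bounded_pos by (metis imageI)
  have geo: "\<delta> \<le> cmod (z - of_real x) \<and> (cmod (z - of_real x))^2 \<le> 8"
    if z: "z \<in> path_image \<gamma>" and x: "x \<in> {-1..1}" for z x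
  proof -
    have zb: "-1-\<delta> \<le> Re z" "Re z \<le> 1+\<delta>" "-\<delta> \<le> Im z" "Im z \<le> \<delta>"
      and nb: "\<not> (-1-\<delta> < Re z \<and> Re z < 1+\<delta> \<and> -\<delta> < Im z \<and> Im z < \<delta>)"
      using z unfolding PI by (auto simp: a1_def a3_def in_cbox_complex_iff in_box_complex_iff)
    have r1: "\<bar>Re (z - of_real x)\<bar> \<le> cmod (z - of_real x)" by (rule abs_Re_le_cmod)
    have r2: "\<bar>Im (z - of_real x)\<bar> \<le> cmod (z - of_real x)" by (rule abs_Im_le_cmod)
    have lo: "\<delta> \<le> cmod (z - of_real x)"
      using nb zb x r1 r2 by auto
    have "-(5/2) \<le> Re z - x" "Re z - x \<le> 5/2" "-(1/2) \<le> Im z" "Im z \<le> 1/2"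
      using zb x \<delta>(2) by auto
    then have "\<bar>Re z - x\<bar> \<le> 5/2" "\<bar>Im z\<bar> \<le> 1/2"
      by (intro abs_leI; linarith)+
    then have "\<bar>Re (z - of_real x)\<bar> \<le> 5/2" "\<bar>Im (z - of_real x)\<bar> \<le> 1/2"
      by simp_all
    then have "(Re (z - of_real x))^2 \<le> (5/2)^2" "(Im (z - of_real x))^2 \<le> (1/2)^2"
      by (metis abs_ge_zero power2_abs power_mono)+
    moreover have "(5/2::real)^2 = 25/4" "(1/2::real)^2 = 1/4" by (simp_all add: power_divide)
    ultimately have "(cmod (z - of_real x))^2 \<le> 8" unfolding cmod_power2 by linarith
    with lo show ?thesis by simp
  qed
  have cauchy: "((\<lambda>w. F w / (w - of_real x)) has_contour_integral (2*pi*\<i> * F (of_real x))) \<gamma>"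
    if x: "x \<in> {-1..1}" for x
  proof -
    have "((\<lambda>w. F w / (w - of_real x)) has_contour_integral
            (2*pi*\<i> * winding_number \<gamma> (of_real x) * F (of_real x))) \<gamma>"
      by (rule Cauchy_integral_formula_convex_simple[OF convex_box(1) holc])
         (use inbox[OF x] PI vg in \<open>auto simp: \<gamma>_def\<close>)
    then show ?thesis using winding_number_rectpath[OF inbox[OF x]] by (simp add: \<gamma>_def)
  qed
  define \<theta> where "\<theta> = 1 - \<delta>^2/8"
  have \<theta>: "0 < \<theta>" "\<theta> < 1"
  proof -
    have "\<delta>^2 \<le> (1/2)^2" using \<delta> by (intro power_mono) auto
    then have "\<delta>^2 \<le> 1/4" by (simp add: power_divide)
    then show "0 < \<theta>" "\<theta> < 1" using \<delta> by (auto simp: \<theta>_def)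
  qed
  define L where "L = cmod (a3 - a1)"
  have L: "L > 0" using \<delta> by (auto simp: L_def a1_def a3_def complex_eq_iff)
  define C where "C = B * (4 * L) / (\<delta> * (2 * pi))"
  have C: "C > 0" using B L \<delta> by (simp add: C_def)
  have approx: "\<exists>q. degree q \<le> 2*N+1 \<and> (\<forall>x\<in>{-1..1}. \<bar>f x - poly q x\<bar> \<le> C * \<theta>^N)" for N
  proof -
    define D where "D = 2*N+1"
    have ccK: "cc (path_image \<gamma>) (Kp N)" by (rule cc_Kp)
    have contj: "continuous_on (path_image \<gamma>) (\<lambda>z. F z * coeff (Kp N z) j)" for j
      using ccK contPI unfolding cc_def by (intro continuous_intros) auto
    define c where "c j = contour_integral \<gamma> (\<lambda>z. F z * coeff (Kp N z) j)" for j
    have hc: "((\<lambda>z. F z * coeff (Kp N z) j) has_contour_integral c j) \<gamma>" for j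
      unfolding c_def \<gamma>_def
      by (rule has_contour_integral_integral, rule rect_integrable) (use contj in \<open>simp add: \<gamma>_def\<close>)
    define q where "q = (\<Sum>j\<le>D. monom (Re (c j / (2*pi*\<i>))) j)"
    have dq: "degree q \<le> D" unfolding q_def
      by (intro degree_sum_le) (auto intro: order_trans[OF degree_monom_le])
    have err: "\<bar>f x - poly q x\<bar> \<le> C * \<theta>^N" if x: "x \<in> {-1..1}" for x
    proof -
      define X where "X = complex_of_real x"
      have pk: "F z * poly (Kp N z) X = (\<Sum>j\<le>D. F z * coeff (Kp N z) j * X^j)" for z
        unfolding poly_sum_bound[OF degree_Kp[of N z, folded D_def]] sum_distrib_left
        by (simp add: mult.assoc)
      have hK: "((\<lambda>z. F z * poly (Kp N z) X) has_contour_integral (\<Sum>j\<le>D. c j * X^j)) \<gamma>"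
        unfolding pk by (intro has_contour_integral_sum has_contour_integral_rmul hc) auto
      have hD: "((\<lambda>z. F z / (z - X) - F z * poly (Kp N z) X) has_contour_integral
                 (2*pi*\<i> * F X - (\<Sum>j\<le>D. c j * X^j))) \<gamma>"
        using has_contour_integral_diff[OF cauchy[OF x] hK] by (simp add: X_def)
      define h where "h z = F z * (1 / (z - X) - poly (Kp N z) X)" for z
      have hD': "(h has_contour_integral (2*pi*\<i> * F X - (\<Sum>j\<le>D. c j * X^j))) \<gamma>"
      proof -
        have "h = (\<lambda>z. F z / (z - X) - F z * poly (Kp N z) X)"
          unfolding h_def by (rule ext) (simp add: right_diff_distrib divide_inverse)
        then show ?thesis using hD by simp
      qed
      have contpk: "continuous_on (path_image \<gamma>) (\<lambda>z. poly (Kp N z) X)"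
      proof -
        have "continuous_on (path_image \<gamma>) (\<lambda>z. \<Sum>j\<le>D. coeff (Kp N z) j * X^j)"
          using ccK unfolding cc_def by (intro continuous_intros) auto
        then show ?thesis
          by (rule continuous_on_eq) (simp add: poly_sum_bound[OF degree_Kp[of N, folded D_def]])
      qed
      have nz: "z - X \<noteq> 0" if "z \<in> path_image \<gamma>" for z
        using geo[OF that x] \<delta> by (auto simp: X_def)
      have conth: "continuous_on (path_image \<gamma>) h"
        unfolding h_def using contPI contpk nz by (intro continuous_intros) auto
      have hb: "cmod (h z) \<le> B * (\<theta>^Suc N / \<delta>)" if z: "z \<in> path_image \<gamma>" for z
      proof -
        have "cmod (1 / (z - X) - poly (Kp N z) X) \<le> \<theta>^Suc N / \<delta>"
          unfolding X_def poly_Kp \<theta>_def using geo[OF z x] \<delta>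
          by (intro kernel_err) auto
        then show ?thesis unfolding h_def norm_mult
          using B(2)[OF z] B(1) by (intro mult_mono) auto
      qed
      have "cmod (2*pi*\<i> * F X - (\<Sum>j\<le>D. c j * X^j)) = cmod (contour_integral \<gamma> h)"
        using contour_integral_unique[OF hD'] by simp
      also have "\<dots> \<le> B * (\<theta>^Suc N / \<delta>) * (4 * L)"
        unfolding L_def \<gamma>_def
        by (rule rect_bound) (use conth hb B \<theta> \<delta> in \<open>auto simp: \<gamma>_def\<close>)
      finally have e1: "cmod (2*pi*\<i> * F X - (\<Sum>j\<le>D. c j * X^j)) \<le> B * (\<theta>^Suc N / \<delta>) * (4 * L)" .
      have pq: "poly q x = Re (\<Sum>j\<le>D. (c j / (2*pi*\<i>)) * X^j)"
      proof -
        have e: "Re (c j * complex_of_real (x ^ j) / (2 * complex_of_real pi * \<i>)) = Re (c j / (2 * complex_of_real pi * \<i>)) * x ^ j" for j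
        proof -
          have r: "Re (w * complex_of_real r) = Re w * r" for w r by simp
          have "Re ((c j / (2 * complex_of_real pi * \<i>)) * complex_of_real (x ^ j)) = Re (c j / (2 * complex_of_real pi * \<i>)) * x^j"
            by (rule r)
          then show ?thesis by (simp only: times_divide_eq_left)
        qed
        show ?thesis
          unfolding q_def X_def by (simp add: poly_sum poly_monom Re_sum e flip: of_real_power)
      qed
      have fx: "f x = Re (F X)" using U(3) x by (simp add: X_def)
      have "f x - poly q x = Re ((2*pi*\<i> * F X - (\<Sum>j\<le>D. c j * X^j)) / (2*pi*\<i>))"
        unfolding fx pq by (simp add: diff_divide_distrib sum_divide_distrib)
      then have "\<bar>f x - poly q x\<bar> \<le> cmod (2*pi*\<i> * F X - (\<Sum>j\<le>D. c j * X^j)) / (2 * pi)"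
        by (metis abs_Re_le_cmod norm_divide norm_mult norm_ii norm_of_real mult_1_right abs_of_pos pi_gt_zero 
                  mult_pos_pos zero_less_numeral norm_numeral mult.assoc)
      also have "\<dots> \<le> B * (\<theta>^Suc N / \<delta>) * (4 * L) / (2 * pi)"
        using e1 by (intro divide_right_mono) auto
      also have "\<dots> = C * \<theta>^Suc N" by (simp add: C_def field_simps)
      also have "\<dots> \<le> C * \<theta>^N"
        using C \<theta> by (intro mult_left_mono power_decreasing) auto
      finally show ?thesis .
    qed
    show ?thesis using dq err unfolding D_def by blast
  qed
  show ?thesis using cf C \<theta> approx by blast
qed



definition dn :: "nat \<Rightarrow> nat \<Rightarrow> nat" where "dn k l = (if k \<le> l then l - k else k - l)"

lemma powr_dn:
  assumes "0 < \<sigma>"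
  shows "(1/\<sigma>) powr (- \<bar>real k - real l\<bar>) = \<sigma> ^ dn k l"
proof -
  have "\<bar>real k - real l\<bar> = real (dn k l)" by (auto simp: dn_def)
  then have "(1/\<sigma>) powr (- \<bar>real k - real l\<bar>) = inverse ((1/\<sigma>) powr real (dn k l))"
    by (simp add: powr_minus)
  also have "(1/\<sigma>) powr real (dn k l) = (1/\<sigma>) ^ dn k l" using assms by (simp add: powr_realpow)
  finally show ?thesis by (simp add: power_one_over)
qed

lemma decay:
  assumes ha: "real_analytic_on_interval h"
  shows "\<exists>K>0. \<exists>\<sigma>. 0 < \<sigma> \<and> \<sigma> < 1 \<and> (\<forall>k l.
            \<bar>coeff_matrix (\<lambda>t s. h t * heaviside (t - s)) k l\<bar> \<le> K * \<sigma> ^ dn k l)"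
proof -
  obtain C \<theta> where cf: "continuous_on {-1..1} h" and C: "0 < C" "0 < \<theta>" "\<theta> < 1"
    and approx: "\<And>N. \<exists>q. degree q \<le> 2*N+1 \<and> (\<forall>x\<in>{-1..1}. \<bar>h x - poly q x\<bar> \<le> C * \<theta>^N)"
    using bernstein[OF ha] by blast
  have "compact (h ` {-1..1})" using cf by (intro compact_continuous_image) auto
  then obtain Bf where Bf: "Bf > 0" "\<And>x. x \<in> {-1..1} \<Longrightarrow> norm (h x) \<le> Bf"
    using compact_imp_bounded bounded_pos by (metis imageI)
  define \<sigma> where "\<sigma> = sqrt \<theta>"
  have \<sigma>: "0 < \<sigma>" "\<sigma> < 1" "\<sigma>^2 = \<theta>" using C by (auto simp: \<sigma>_def)
  define K where "K = 9/4 * (C / \<sigma>^4 + Bf / \<sigma>^2)"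
  have K: "K > 0" unfolding K_def using C Bf \<sigma>(1)
    by (intro mult_pos_pos add_pos_pos divide_pos_pos zero_less_power) auto
  have bound: "\<bar>coeff_matrix (\<lambda>t s. h t * heaviside (t - s)) k l\<bar> \<le> K * \<sigma> ^ dn k l" for k l
  proof (cases "dn k l \<le> 2")
    case True
    have "\<bar>coeff_matrix (\<lambda>t s. h t * heaviside (t - s)) k l\<bar> \<le> 9/4 * Bf"
      by (rule entry_bound[OF cf, of 0]) (use Bf in auto)
    also have "\<dots> = 9/4 * (Bf / \<sigma>^2) * \<sigma>^2" using \<sigma>(1) by (simp del: \<sigma>(3))
    also have "\<dots> \<le> 9/4 * (Bf / \<sigma>^2) * \<sigma> ^ dn k l"
      using True \<sigma> Bf by (intro mult_left_mono power_decreasing) auto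
    also have "\<dots> \<le> K * \<sigma> ^ dn k l"
      using C \<sigma> by (intro mult_right_mono) (auto simp: K_def)
    finally show ?thesis .
  next
    case False
    define m where "m = dn k l"
    define N where "N = (m - 3) div 2"
    have N: "2*N + 1 \<le> m - 2" "m \<le> 2*N + 4" using False by (auto simp: N_def m_def)
    obtain q where q: "degree q \<le> 2*N+1" "\<And>x. x \<in> {-1..1} \<Longrightarrow> \<bar>h x - poly q x\<bar> \<le> C * \<theta>^N"
      using approx[of N] by blast
    have orth: "Ip (q * PL k * QL l) = 0"
    proof (rule orth_cases)
      show "degree q + l + 1 < k \<or> degree q + k + 2 \<le> l"
        using q(1) N False unfolding m_def dn_def by (auto split: if_splits)
    qed
    have "\<bar>coeff_matrix (\<lambda>t s. h t * heaviside (t - s)) k l\<bar> \<le> 9/4 * (C * \<theta>^N)"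
      by (rule entry_bound[OF cf q(2) orth])
    also have "\<theta>^N = \<sigma>^(2*N)" using \<sigma> by (simp add: power_mult)
    also have "\<sigma>^(2*N) = \<sigma>^(2*N+4) / \<sigma>^4" using \<sigma> by (simp add: power_add)
    also have "\<sigma>^(2*N+4) \<le> \<sigma>^m" using N \<sigma> by (intro power_decreasing) auto
    then have "9/4 * (C * (\<sigma>^(2*N+4) / \<sigma>^4)) \<le> 9/4 * (C * (\<sigma>^m / \<sigma>^4))"
      using C \<sigma> by (intro mult_left_mono divide_right_mono) auto
    also have "\<dots> \<le> K * \<sigma>^m"
    proof -
      have "9/4 * (C * (\<sigma>^m / \<sigma>^4)) = (9/4 * (C / \<sigma>^4)) * \<sigma>^m" by simp
      also have "\<dots> \<le> K * \<sigma>^m" using Bf \<sigma> by (intro mult_right_mono) (auto simp: K_def)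
      finally show ?thesis .
    qed
    finally show ?thesis unfolding m_def .
  qed
  show ?thesis using K \<sigma> bound by blast
qed

theorem mainTheorem9:
  fixes f :: "real \<Rightarrow> real"
  assumes "real_analytic_on_interval f"
  shows "(\<exists>K>0. \<exists>\<rho>>1. \<forall>k l.
            \<bar>coeff_matrix (\<lambda>t s. f t * heaviside (t - s)) k l\<bar>
              \<le> K * \<rho> powr (- \<bar>real k - real l\<bar>))
       \<and> (\<forall>g. real_analytic_on_interval g \<longrightarrow>
            (\<forall>k l. summable (\<lambda>j. \<bar>coeff_matrix (\<lambda>t s. f t * heaviside (t - s)) k j
                                   * coeff_matrix (\<lambda>t s. g t * heaviside (t - s)) j l\<bar>)))"
proof
  obtain K \<sigma> where K: "K > 0" "0 < \<sigma>" "\<sigma> < 1"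
    and b: "\<And>k l. \<bar>coeff_matrix (\<lambda>t s. f t * heaviside (t - s)) k l\<bar> \<le> K * \<sigma> ^ dn k l"
    using decay[OF assms] by blast
  show "\<exists>K>0. \<exists>\<rho>>1. \<forall>k l.
            \<bar>coeff_matrix (\<lambda>t s. f t * heaviside (t - s)) k l\<bar>
              \<le> K * \<rho> powr (- \<bar>real k - real l\<bar>)"
  proof (intro exI conjI allI)
    show "K > 0" by (rule K(1))
    show "1/\<sigma> > 1" using K by simp
    fix k l show "\<bar>coeff_matrix (\<lambda>t s. f t * heaviside (t - s)) k l\<bar> \<le> K * (1/\<sigma>) powr (- \<bar>real k - real l\<bar>)"
      using b[of k l] by (simp add: powr_dn[OF K(2)])
  qed
  show "\<forall>g. real_analytic_on_interval g \<longrightarrow>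
            (\<forall>k l. summable (\<lambda>j. \<bar>coeff_matrix (\<lambda>t s. f t * heaviside (t - s)) k j
                                   * coeff_matrix (\<lambda>t s. g t * heaviside (t - s)) j l\<bar>))"
  proof (intro allI impI)
    fix g k l assume ga: "real_analytic_on_interval g"
    obtain K' \<sigma>' where K': "K' > 0" "0 < \<sigma>'" "\<sigma>' < 1"
      and b': "\<And>k l. \<bar>coeff_matrix (\<lambda>t s. g t * heaviside (t - s)) k l\<bar> \<le> K' * \<sigma>' ^ dn k l"
      using decay[OF ga] by blast
    show "summable (\<lambda>j. \<bar>coeff_matrix (\<lambda>t s. f t * heaviside (t - s)) k j
                         * coeff_matrix (\<lambda>t s. g t * heaviside (t - s)) j l\<bar>)"
    proof (rule summable_comparison_test')
      show "summable (\<lambda>j. (K * K' / \<sigma>^k) * \<sigma>^j)"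
        using K by (intro summable_mult summable_geometric) auto
      show "norm \<bar>coeff_matrix (\<lambda>t s. f t * heaviside (t - s)) k j
                         * coeff_matrix (\<lambda>t s. g t * heaviside (t - s)) j l\<bar> \<le> (K * K' / \<sigma>^k) * \<sigma>^j"
        if j: "j \<ge> k" for j
      proof -
        have g1: "\<bar>coeff_matrix (\<lambda>t s. g t * heaviside (t - s)) j l\<bar> \<le> K'"
          using b'[of j l] K' power_le_one[of \<sigma>' "dn j l"]
          by (smt (verit) mult_left_le)
        have f1: "\<bar>coeff_matrix (\<lambda>t s. f t * heaviside (t - s)) k j\<bar> \<le> K * \<sigma>^(j - k)"
          using b[of k j] j by (simp add: dn_def)
        have "norm \<bar>coeff_matrix (\<lambda>t s. f t * heaviside (t - s)) k j
                         * coeff_matrix (\<lambda>t s. g t * heaviside (t - s)) j l\<bar>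
              = \<bar>coeff_matrix (\<lambda>t s. f t * heaviside (t - s)) k j\<bar> * \<bar>coeff_matrix (\<lambda>t s. g t * heaviside (t - s)) j l\<bar>"
          by (simp add: abs_mult)
        also have "\<dots> \<le> (K * \<sigma>^(j - k)) * K'"
          using f1 g1 by (intro mult_mono) auto
        also have "\<sigma>^(j - k) = \<sigma>^j / \<sigma>^k" using j K by (simp add: power_diff)
        also have "K * (\<sigma>^j / \<sigma>^k) * K' = (K * K' / \<sigma>^k) * \<sigma>^j" by simp
        finally show ?thesis .
      qed
    qed
  qed
qed


end
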